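(* $\mathcal{T}$ is functional if and only if (1) for each relevant pair $\langle m_1,m_2\rangle$ of a state $p\in Q^2$, $\nu(p)$ is a most general equalizer (mge) for $\langle m_1,m_2\rangle$, and (2) for each final and accessible state $f\in F\times F$ of $\mathcal{A}^2$ we have $\nu(f)=\langle e,e\rangle$.
   Context: Let $\mathcal{M}=\langle M,\circ,e\rangle$ be a monoid. A tuple $\langle m_1,\dots,m_n\rangle\in M^n$ is equalizable if there is $\langle x_1,\dots,x_n\rangle\in M^n$ (an equalizer) with $m_1x_1=\dots=m_nx_n$; an equalizer $\langle x_1,\dots,x_n\rangle$ is a most general equalizer (mge) if every equalizer has the form $\langle x_1x,\dots,x_nx\rangle$ for some $x\in M$. $\mathcal{M}$ is an mge monoid if it has right cancellation ($ac=bc\Rightarrow a=b$) and every equalizable pair has an mge. Let $\eta:M^2\to M^2$ be a function that returns an mge $\eta(m,m')$ for each equalizable pair $\langle m,m'\rangle$. Let $\mathcal{T}=\langle \Sigma^*\times\mathcal{M},Q,I,F,\Delta\rangle$ be a trimmed (every state accessible and co-accessible) monoidal finite-state transducer with output in the mge monoid $\mathcal{M}$, where $\Delta\subseteq Q\times((\Sigma\cup\{\varepsilon\})\times M)\times Q$ and $\Delta^*$ is its generalized transition relation; $\mathcal{T}$ is functional if its accepted relation $L(\mathcal{T})\subseteq\Sigma^*\times M$ is a function. Let $\mathcal{A}^2=\langle \mathcal{M}\times\mathcal{M},Q\times Q,I\times I,F\times F,\Delta_2\rangle$ be a squared output automaton for $\mathcal{T}$, i.e. $\Delta_2$ is finite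 and $\langle\langle p_1,p_2\rangle,\langle m,n\rangle,\langle q_1,q_2\rangle\rangle\in\Delta_2^*$ iff there is $u\in\Sigma^*$ with $\langle p_1,\langle u,m\rangle,q_1\rangle\in\Delta^*$ and $\langle p_2,\langle u,n\rangle,q_2\rangle\in\Delta^*$. For a state $\langle q_1,q_2\rangle$ lying on a successful path of $\mathcal{A}^2$, a pair $\langle m_1,m_2\rangle$ is a relevant pair for $\langle q_1,q_2\rangle$ if $\langle\langle i_1,i_2\rangle,\langle m_1,m_2\rangle,\langle q_1,q_2\rangle\rangle\in\Delta_2^*$ for some $\langle i_1,i_2\rangle\in I\times I$. Let $\langle\rho,\nu\rangle$ be a valuation of $\mathcal{A}^2$: $\rho,\nu:Q^2\to M^2$ are partial functions where $\rho(q)$ is some chosen relevant pair for $q$ if one exists (undefined otherwise), with $\rho(q)=\langle e,e\rangle$ for $q\in I^2$ having a relevant pair; and $\nu(q)=\langle e,e\rangle$ if $\rho(q)$ is defined and of the form $\langle m,m\rangle$, $\nu(q)=\eta(\rho(q))$ if $\rho(q)$ is defined and equalizable, and $\nu(q)$ undefined otherwise. *)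

theory Defs
  imports Main
begin

text \<open>The monoid M is the carrier type of a type of class monoid_mult
  (operation *, neutral element 1 = e).\<close>

definition right_cancel :: "('m::monoid_mult) itself \<Rightarrow> bool" where
  "right_cancel _ \<longleftrightarrow> (\<forall>a b c :: 'm. a * c = b * c \<longrightarrow> a = b)"

definition is_equalizer :: "'m::monoid_mult \<times> 'm \<Rightarrow> 'm \<times> 'm \<Rightarrow> bool" where
  "is_equalizer mm xx \<longleftrightarrow> fst mm * fst xx = snd mm * snd xx"

definition equalizable :: "'m::monoid_mult \<times> 'm \<Rightarrow> bool" where
  "equalizable mm \<longleftrightarrow> (\<exists>xx. is_equalizer mm xx)"

definition is_mge :: "'m::monoid_mult \<times> 'm \<Rightarrow> 'm \<times> 'm \<Rightarrow> bool" where
  "is_mge mm xx \<longleftrightarrow> is_equalizer mm xx \<and>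
     (\<forall>yy. is_equalizer mm yy \<longrightarrow> (\<exists>x. fst yy = fst xx * x \<and> snd yy = snd xx * x))"

definition mge_monoid :: "('m::monoid_mult) itself \<Rightarrow> bool" where
  "mge_monoid T \<longleftrightarrow> right_cancel T \<and>
     (\<forall>mm :: 'm \<times> 'm. equalizable mm \<longrightarrow> (\<exists>xx. is_mge mm xx))"

text \<open>Input letters: None encodes epsilon.\<close>
definition word_of :: "'s option \<Rightarrow> 's list" where
  "word_of a = (case a of None \<Rightarrow> [] | Some x \<Rightarrow> [x])"

inductive_set trans_star ::
  "'q set \<Rightarrow> ('q \<times> ('s option \<times> 'm::monoid_mult) \<times> 'q) set \<Rightarrow> ('q \<times> ('s list \<times> 'm) \<times> 'q) set"
  for Q \<Delta> where
  refl: "q \<in> Q \<Longrightarrow> (q, ([], 1), q) \<in> trans_star Q \<Delta>"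
| step: "(p, (u, m), q) \<in> trans_star Q \<Delta> \<Longrightarrow> (q, (a, n), r) \<in> \<Delta> \<Longrightarrow>
         (p, (u @ word_of a, m * n), r) \<in> trans_star Q \<Delta>"

inductive_set trans_star2 ::
  "'p set \<Rightarrow> ('p \<times> ('m::monoid_mult \<times> 'm) \<times> 'p) set \<Rightarrow> ('p \<times> ('m \<times> 'm) \<times> 'p) set"
  for Q2 \<Delta>2 where
  refl: "q \<in> Q2 \<Longrightarrow> (q, (1, 1), q) \<in> trans_star2 Q2 \<Delta>2"
| step: "(p, (m1, m2), q) \<in> trans_star2 Q2 \<Delta>2 \<Longrightarrow> (q, (n1, n2), r) \<in> \<Delta>2 \<Longrightarrow>
         (p, (m1 * n1, m2 * n2), r) \<in> trans_star2 Q2 \<Delta>2"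

definition monoidal_fst ::
  "'q set \<Rightarrow> 'q set \<Rightarrow> 'q set \<Rightarrow> ('q \<times> ('s option \<times> 'm::monoid_mult) \<times> 'q) set \<Rightarrow> bool" where
  "monoidal_fst Q I F \<Delta> \<longleftrightarrow> finite Q \<and> finite \<Delta> \<and> I \<subseteq> Q \<and> F \<subseteq> Q \<and>
     \<Delta> \<subseteq> Q \<times> (UNIV \<times> UNIV) \<times> Q"

definition trimmed ::
  "'q set \<Rightarrow> 'q set \<Rightarrow> 'q set \<Rightarrow> ('q \<times> ('s option \<times> 'm::monoid_mult) \<times> 'q) set \<Rightarrow> bool" where
  "trimmed Q I F \<Delta> \<longleftrightarrow> (\<forall>q\<in>Q.
     (\<exists>i\<in>I. \<exists>u m. (i, (u, m), q) \<in> trans_star Q \<Delta>) \<and>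
     (\<exists>f\<in>F. \<exists>u m. (q, (u, m), f) \<in> trans_star Q \<Delta>))"

definition lang ::
  "'q set \<Rightarrow> 'q set \<Rightarrow> 'q set \<Rightarrow> ('q \<times> ('s option \<times> 'm::monoid_mult) \<times> 'q) set \<Rightarrow> ('s list \<times> 'm) set" where
  "lang Q I F \<Delta> = {(u, m). \<exists>i\<in>I. \<exists>f\<in>F. (i, (u, m), f) \<in> trans_star Q \<Delta>}"

definition functional ::
  "'q set \<Rightarrow> 'q set \<Rightarrow> 'q set \<Rightarrow> ('q \<times> ('s option \<times> 'm::monoid_mult) \<times> 'q) set \<Rightarrow> bool" where
  "functional Q I F \<Delta> \<longleftrightarrow>
     (\<forall>u m m'. (u, m) \<in> lang Q I F \<Delta> \<longrightarrow> (u, m') \<in> lang Q I F \<Delta> \<longrightarrow> m = m')"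

definition squared_output_automaton ::
  "'q set \<Rightarrow> ('q \<times> ('s option \<times> 'm::monoid_mult) \<times> 'q) set \<Rightarrow>
   (('q \<times> 'q) \<times> ('m \<times> 'm) \<times> ('q \<times> 'q)) set \<Rightarrow> bool" where
  "squared_output_automaton Q \<Delta> \<Delta>2 \<longleftrightarrow> finite \<Delta>2 \<and>
     \<Delta>2 \<subseteq> (Q \<times> Q) \<times> UNIV \<times> (Q \<times> Q) \<and>
     (\<forall>p1 p2 m n q1 q2.
        ((p1, p2), (m, n), (q1, q2)) \<in> trans_star2 (Q \<times> Q) \<Delta>2 \<longleftrightarrow>
        (\<exists>u. (p1, (u, m), q1) \<in> trans_star Q \<Delta> \<and> (p2, (u, n), q2) \<in> trans_star Q \<Delta>))"

definition on_successful_path ::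
  "'q set \<Rightarrow> 'q set \<Rightarrow> 'q set \<Rightarrow> (('q \<times> 'q) \<times> ('m::monoid_mult \<times> 'm) \<times> ('q \<times> 'q)) set \<Rightarrow> 'q \<times> 'q \<Rightarrow> bool" where
  "on_successful_path Q I F \<Delta>2 q \<longleftrightarrow>
     (\<exists>i\<in>I \<times> I. \<exists>f\<in>F \<times> F. \<exists>l l'. (i, l, q) \<in> trans_star2 (Q \<times> Q) \<Delta>2 \<and> (q, l', f) \<in> trans_star2 (Q \<times> Q) \<Delta>2)"

definition relevant_pair ::
  "'q set \<Rightarrow> 'q set \<Rightarrow> 'q set \<Rightarrow> (('q \<times> 'q) \<times> ('m::monoid_mult \<times> 'm) \<times> ('q \<times> 'q)) set \<Rightarrow> 'q \<times> 'q \<Rightarrow> 'm \<times> 'm \<Rightarrow> bool" where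
  "relevant_pair Q I F \<Delta>2 q mm \<longleftrightarrow> on_successful_path Q I F \<Delta>2 q \<and>
     (\<exists>i\<in>I \<times> I. (i, mm, q) \<in> trans_star2 (Q \<times> Q) \<Delta>2)"

definition accessible2 ::
  "'q set \<Rightarrow> 'q set \<Rightarrow> (('q \<times> 'q) \<times> ('m::monoid_mult \<times> 'm) \<times> ('q \<times> 'q)) set \<Rightarrow> 'q \<times> 'q \<Rightarrow> bool" where
  "accessible2 Q I \<Delta>2 q \<longleftrightarrow> (\<exists>i\<in>I \<times> I. \<exists>l. (i, l, q) \<in> trans_star2 (Q \<times> Q) \<Delta>2)"

definition valuation_rho ::
  "'q set \<Rightarrow> 'q set \<Rightarrow> 'q set \<Rightarrow> (('q \<times> 'q) \<times> ('m::monoid_mult \<times> 'm) \<times> ('q \<times> 'q)) set \<Rightarrow>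
   ('q \<times> 'q \<Rightarrow> ('m \<times> 'm) option) \<Rightarrow> bool" where
  "valuation_rho Q I F \<Delta>2 \<rho> \<longleftrightarrow>
     (\<forall>q. (\<exists>mm. relevant_pair Q I F \<Delta>2 q mm) \<longrightarrow>
          (\<exists>mm. \<rho> q = Some mm \<and> relevant_pair Q I F \<Delta>2 q mm)) \<and>
     (\<forall>q. \<not> (\<exists>mm. relevant_pair Q I F \<Delta>2 q mm) \<longrightarrow> \<rho> q = None) \<and>
     (\<forall>q \<in> I \<times> I. (\<exists>mm. relevant_pair Q I F \<Delta>2 q mm) \<longrightarrow> \<rho> q = Some (1, 1))"

definition valuation_nu ::
  "('m::monoid_mult \<times> 'm \<Rightarrow> 'm \<times> 'm) \<Rightarrow> ('q \<times> 'q \<Rightarrow> ('m \<times> 'm) option) \<Rightarrow> 'q \<times> 'q \<Rightarrow> ('m \<times> 'm) option" where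
  "valuation_nu \<eta> \<rho> q =
     (case \<rho> q of
        None \<Rightarrow> None
      | Some mm \<Rightarrow> (if fst mm = snd mm then Some (1, 1)
                    else if equalizable mm then Some (\<eta> mm) else None))"

end

theory Submission
  imports Defs
begin

lemma ts_concat:
  assumes "(q, (w, n), r) \<in> trans_star Q \<Delta>"
  shows "(p, (u, m), q) \<in> trans_star Q \<Delta> \<Longrightarrow> (p, (u @ w, m * n), r) \<in> trans_star Q \<Delta>"
  using assms
proof (induction q w n r rule: trans_star.induct)
  case (refl q)
  then show ?case by simp
next
  case (step p' u' m' q' a n' r')
  then have "(p, (u @ u', m * m'), q') \<in> trans_star Q \<Delta>" by simp
  from trans_star.step[OF this step.hyps(2)] show ?case by (simp add: mult.assoc)
qed

lemma ts2_end:
  assumes "(p, l, q) \<in> trans_star2 Q2 \<Delta>2" and "\<Delta>2 \<subseteq> Q2 \<times> UNIV \<times> Q2"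
  shows "q \<in> Q2"
proof -
  obtain l1 l2 where "l = (l1, l2)" by (cases l)
  with assms(1) have "(p, (l1, l2), q) \<in> trans_star2 Q2 \<Delta>2" by simp
  then show ?thesis using assms(2)
    by (induction p l1 l2 q rule: trans_star2.induct) auto
qed

lemma left_cancel:
  assumes mge: "mge_monoid TYPE('m::monoid_mult)"
    and eq: "(a::'m) * x = a * y"
  shows "x = y"
proof -
  have rc: "\<And>a b c :: 'm. a * c = b * c \<Longrightarrow> a = b"
    using mge unfolding mge_monoid_def right_cancel_def by blast
  have "equalizable (a, a)" unfolding equalizable_def is_equalizer_def by auto
  then obtain x0 y0 where m0: "is_mge (a, a) (x0, y0)"
    using mge unfolding mge_monoid_def by fastforce
  have "is_equalizer (a, a) (1, 1)" unfolding is_equalizer_def by simp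
  then obtain z where z: "1 = x0 * z" "1 = y0 * z" using m0 unfolding is_mge_def by fastforce
  have "(z * x0) * z = 1 * z" using z by (simp add: mult.assoc)
  then have zx: "z * x0 = 1" using rc by blast
  have "(z * y0) * z = 1 * z" using z by (simp add: mult.assoc)
  then have zy: "z * y0 = 1" using rc by blast
  have "x0 = y0"
  proof -
    have "x0 = x0 * (z * y0)" using zy by simp
    also have "\<dots> = (x0 * z) * y0" by (simp add: mult.assoc)
    also have "\<dots> = y0" using z by simp
    finally show ?thesis .
  qed
  have "is_equalizer (a, a) (x, y)" using eq unfolding is_equalizer_def by simp
  then obtain t where "x = x0 * t" "y = y0 * t" using m0 unfolding is_mge_def by fastforce
  then show ?thesis using \<open>x0 = y0\<close> by simp
qed

lemma mge_transfer:
  assumes mge: "mge_monoid TYPE('m::monoid_mult)"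
    and n1: "is_equalizer (a, b) (n1, n2)" and n2: "is_equalizer (m1, m2) ((n1::'m), n2)"
    and v: "is_mge (a, b) v"
  shows "is_mge (m1, m2) v"
proof -
  have rc: "\<And>a b c :: 'm. a * c = b * c \<Longrightarrow> a = b"
    using mge unfolding mge_monoid_def right_cancel_def by blast
  obtain x y where vxy: "v = (x, y)" by (cases v)
  obtain z where z: "n1 = x * z" "n2 = y * z" using v n1 unfolding vxy is_mge_def by fastforce
  have "(m1 * x) * z = (m2 * y) * z" using n2 z unfolding is_equalizer_def by (simp add: mult.assoc)
  then have veq: "m1 * x = m2 * y" using rc by blast
  have "equalizable (m1, m2)" using n2 unfolding equalizable_def by blast
  then obtain u1 u2 where u: "is_mge (m1, m2) (u1, u2)" using mge unfolding mge_monoid_def by fastforce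
  obtain z' where z': "n1 = u1 * z'" "n2 = u2 * z'" using u n2 unfolding is_mge_def by fastforce
  have "(a * u1) * z' = (b * u2) * z'" using n1 z' unfolding is_equalizer_def by (simp add: mult.assoc)
  then have "a * u1 = b * u2" using rc by blast
  then obtain s where s: "u1 = x * s" "u2 = y * s" using v unfolding vxy is_mge_def is_equalizer_def by fastforce
  show ?thesis unfolding vxy is_mge_def
  proof (intro conjI allI impI)
    show "is_equalizer (m1, m2) (x, y)" using veq unfolding is_equalizer_def by simp
  next
    fix yy assume "is_equalizer (m1, m2) yy"
    then obtain t where "fst yy = u1 * t" "snd yy = u2 * t" using u unfolding is_mge_def by fastforce
    then show "\<exists>w. fst yy = fst (x, y) * w \<and> snd yy = snd (x, y) * w"
      using s by (auto simp: mult.assoc)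
  qed
qed

theorem lemma7:
  fixes Q I F :: "'q set"
    and \<Delta> :: "('q \<times> ('s option \<times> 'm::monoid_mult) \<times> 'q) set"
    and \<Delta>2 :: "(('q \<times> 'q) \<times> ('m \<times> 'm) \<times> ('q \<times> 'q)) set"
    and \<eta> :: "'m \<times> 'm \<Rightarrow> 'm \<times> 'm"
    and \<rho> :: "'q \<times> 'q \<Rightarrow> ('m \<times> 'm) option"
  assumes mge: "mge_monoid TYPE('m)"
    and eta: "\<And>mm. equalizable mm \<Longrightarrow> is_mge mm (\<eta> mm)"
    and fst: "monoidal_fst Q I F \<Delta>"
    and trim: "trimmed Q I F \<Delta>"
    and sq: "squared_output_automaton Q \<Delta> \<Delta>2"
    and rho: "valuation_rho Q I F \<Delta>2 \<rho>"
  shows "functional Q I F \<Delta> \<longleftrightarrow>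
    ((\<forall>p mm. relevant_pair Q I F \<Delta>2 p mm \<longrightarrow>
        (\<exists>v. valuation_nu \<eta> \<rho> p = Some v \<and> is_mge mm v)) \<and>
     (\<forall>f \<in> F \<times> F. accessible2 Q I \<Delta>2 f \<longrightarrow> valuation_nu \<eta> \<rho> f = Some (1, 1)))"
proof -
  have sqe: "\<And>p1 p2 m n q1 q2.
        ((p1, p2), (m, n), (q1, q2)) \<in> trans_star2 (Q \<times> Q) \<Delta>2 \<longleftrightarrow>
        (\<exists>u. (p1, (u, m), q1) \<in> trans_star Q \<Delta> \<and> (p2, (u, n), q2) \<in> trans_star Q \<Delta>)"
    using sq unfolding squared_output_automaton_def by blast
  have d2: "\<Delta>2 \<subseteq> (Q \<times> Q) \<times> UNIV \<times> (Q \<times> Q)" using sq unfolding squared_output_automaton_def by blast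
  have rho1: "\<And>q mm. relevant_pair Q I F \<Delta>2 q mm \<Longrightarrow> \<exists>mm'. \<rho> q = Some mm' \<and> relevant_pair Q I F \<Delta>2 q mm'"
    using rho unfolding valuation_rho_def by blast
  have acc_rel: "relevant_pair Q I F \<Delta>2 f l" if "f \<in> F \<times> F" "i \<in> I \<times> I" "(i, l, f) \<in> trans_star2 (Q \<times> Q) \<Delta>2" for f i l
  proof -
    have "f \<in> Q \<times> Q" using ts2_end[OF that(3) d2] .
    then have "(f, (1,1), f) \<in> trans_star2 (Q \<times> Q) \<Delta>2" by (rule trans_star2.refl)
    then show ?thesis using that unfolding relevant_pair_def on_successful_path_def by blast
  qed
  show ?thesis
  proof
    assume func: "functional Q I F \<Delta>"
    have cont: "is_equalizer mm n" if rel: "relevant_pair Q I F \<Delta>2 p mm"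
      and i: "i \<in> I \<times> I" and f: "f \<in> F \<times> F" and pf: "(p, n, f) \<in> trans_star2 (Q \<times> Q) \<Delta>2"
      and ip: "(i, mm, p) \<in> trans_star2 (Q \<times> Q) \<Delta>2" for p mm i f n
    proof -
      obtain p1 p2 where p: "p = (p1, p2)" by (cases p)
      obtain i1 i2 where ii: "i = (i1, i2)" by (cases i)
      obtain f1 f2 where ff: "f = (f1, f2)" by (cases f)
      obtain m1 m2 where mm: "mm = (m1, m2)" by (cases mm)
      obtain n1 n2 where nn: "n = (n1, n2)" by (cases n)
      obtain u where u: "(i1, (u, m1), p1) \<in> trans_star Q \<Delta>" "(i2, (u, m2), p2) \<in> trans_star Q \<Delta>"
        using ip sqe unfolding p ii mm by blast
      obtain w where w: "(p1, (w, n1), f1) \<in> trans_star Q \<Delta>" "(p2, (w, n2), f2) \<in> trans_star Q \<Delta>"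
        using pf sqe unfolding p ff nn by blast
      have "(i1, (u @ w, m1 * n1), f1) \<in> trans_star Q \<Delta>" using ts_concat[OF w(1) u(1)] .
      moreover have "(i2, (u @ w, m2 * n2), f2) \<in> trans_star Q \<Delta>" using ts_concat[OF w(2) u(2)] .
      ultimately have "m1 * n1 = m2 * n2" using func i f unfolding ii ff functional_def lang_def by blast
      then show ?thesis unfolding mm nn is_equalizer_def by simp
    qed
    have C1: "\<exists>v. valuation_nu \<eta> \<rho> p = Some v \<and> is_mge mm v" if rel: "relevant_pair Q I F \<Delta>2 p mm" for p mm
    proof -
      obtain ab where ab: "\<rho> p = Some ab" "relevant_pair Q I F \<Delta>2 p ab" using rho1[OF rel] by blast
      obtain i f l l' where osp: "i \<in> I \<times> I" "f \<in> F \<times> F" "(i, l, p) \<in> trans_star2 (Q \<times> Q) \<Delta>2"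
         "(p, l', f) \<in> trans_star2 (Q \<times> Q) \<Delta>2"
        using rel unfolding relevant_pair_def on_successful_path_def by blast
      obtain i' where i': "i' \<in> I \<times> I" "(i', mm, p) \<in> trans_star2 (Q \<times> Q) \<Delta>2"
        using rel unfolding relevant_pair_def by blast
      obtain i'' where i'': "i'' \<in> I \<times> I" "(i'', ab, p) \<in> trans_star2 (Q \<times> Q) \<Delta>2"
        using ab(2) unfolding relevant_pair_def by blast
      have e1: "is_equalizer mm l'" using cont[OF rel i'(1) osp(2) osp(4) i'(2)] .
      have e2: "is_equalizer ab l'" using cont[OF ab(2) i''(1) osp(2) osp(4) i''(2)] .
      obtain a b where abd: "ab = (a, b)" by (cases ab)
      obtain n1 n2 where nn: "l' = (n1, n2)" by (cases l')
      obtain m1 m2 where mmd: "mm = (m1, m2)" by (cases mm)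
      show ?thesis
      proof (cases "a = b")
        case True
        have "is_mge (a, b) (1, 1)" unfolding is_mge_def is_equalizer_def
          using True left_cancel[OF mge, of a] by auto
        then have "is_mge mm (1, 1)"
          using mge_transfer[OF mge, of a b n1 n2 m1 m2] e1 e2 unfolding abd nn mmd by blast
        moreover have "valuation_nu \<eta> \<rho> p = Some (1, 1)"
          unfolding valuation_nu_def using ab(1) abd True by simp
        ultimately show ?thesis by blast
      next
        case False
        have eqz: "equalizable ab" using e2 unfolding equalizable_def by blast
        have "is_mge mm (\<eta> ab)"
          using mge_transfer[OF mge, of a b n1 n2 m1 m2] e1 e2 eta[OF eqz] unfolding abd nn mmd by blast
        moreover have "valuation_nu \<eta> \<rho> p = Some (\<eta> ab)"
          unfolding valuation_nu_def using ab(1) abd False eqz by simp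
        ultimately show ?thesis by blast
      qed
    qed
    have C2: "valuation_nu \<eta> \<rho> f = Some (1, 1)" if f: "f \<in> F \<times> F" and acc: "accessible2 Q I \<Delta>2 f" for f
    proof -
      obtain i l where il: "i \<in> I \<times> I" "(i, l, f) \<in> trans_star2 (Q \<times> Q) \<Delta>2"
        using acc unfolding accessible2_def by blast
      have rel: "relevant_pair Q I F \<Delta>2 f l" using acc_rel[OF f il] .
      obtain ab where ab: "\<rho> f = Some ab" "relevant_pair Q I F \<Delta>2 f ab" using rho1[OF rel] by blast
      obtain i'' where i'': "i'' \<in> I \<times> I" "(i'', ab, f) \<in> trans_star2 (Q \<times> Q) \<Delta>2"
        using ab(2) unfolding relevant_pair_def by blast
      have "f \<in> Q \<times> Q" using ts2_end[OF il(2) d2] .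
      then have "(f, (1,1), f) \<in> trans_star2 (Q \<times> Q) \<Delta>2" by (rule trans_star2.refl)
      from cont[OF ab(2) i''(1) f this i''(2)] have "fst ab = snd ab"
        unfolding is_equalizer_def by simp
      then show ?thesis unfolding valuation_nu_def using ab(1) by simp
    qed
    show "(\<forall>p mm. relevant_pair Q I F \<Delta>2 p mm \<longrightarrow>
        (\<exists>v. valuation_nu \<eta> \<rho> p = Some v \<and> is_mge mm v)) \<and>
     (\<forall>f \<in> F \<times> F. accessible2 Q I \<Delta>2 f \<longrightarrow> valuation_nu \<eta> \<rho> f = Some (1, 1))"
      using C1 C2 by blast
  next
    assume H: "(\<forall>p mm. relevant_pair Q I F \<Delta>2 p mm \<longrightarrow>
        (\<exists>v. valuation_nu \<eta> \<rho> p = Some v \<and> is_mge mm v)) \<and>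
     (\<forall>f \<in> F \<times> F. accessible2 Q I \<Delta>2 f \<longrightarrow> valuation_nu \<eta> \<rho> f = Some (1, 1))"
    show "functional Q I F \<Delta>"
      unfolding functional_def
    proof (intro allI impI)
      fix u m m'
      assume "(u, m) \<in> lang Q I F \<Delta>" "(u, m') \<in> lang Q I F \<Delta>"
      then obtain i1 f1 i2 f2 where p: "i1 \<in> I" "f1 \<in> F" "(i1, (u, m), f1) \<in> trans_star Q \<Delta>"
        "i2 \<in> I" "f2 \<in> F" "(i2, (u, m'), f2) \<in> trans_star Q \<Delta>"
        unfolding lang_def by blast
      have t2: "((i1, i2), (m, m'), (f1, f2)) \<in> trans_star2 (Q \<times> Q) \<Delta>2" using sqe p by blast
      have fF: "(f1, f2) \<in> F \<times> F" and iI: "(i1, i2) \<in> I \<times> I" using p by auto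
      have rel: "relevant_pair Q I F \<Delta>2 (f1, f2) (m, m')" using acc_rel[OF fF iI t2] .
      have acc: "accessible2 Q I \<Delta>2 (f1, f2)" unfolding accessible2_def using iI t2 by blast
      obtain v where "valuation_nu \<eta> \<rho> (f1, f2) = Some v" "is_mge (m, m') v" using H rel by blast
      moreover have "valuation_nu \<eta> \<rho> (f1, f2) = Some (1, 1)" using H fF acc by blast
      ultimately have "is_mge (m, m') (1, 1)" by simp
      then show "m = m'" unfolding is_mge_def is_equalizer_def by simp
    qed
  qed
qed

end
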